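(* Let $\mathtt{InpEqSize}=\{(G,\mathbf{x}): \mathbf{x}(v)=|V(G)|\ \text{for every } v\in V(G)\}$, where $\mathbf{x}(v)$ is the binary encoding of an integer. Then $\mathtt{InpEqSize}\notin\mathrm{NLD}(t)$ for every time bound $t=o(n)$.
   Context: Configurations are pairs $(G,\mathbf{x})$ with $G$ a finite connected graph and $\mathbf{x}:V(G)\to\{0,1\}^*$. A distributed language is a decidable set of configurations. Model: synchronous LOCAL model. Nodes have distinct identities given by an injective $\mathrm{Id}:V(G)\to\mathbb{N}$ and unbounded messages. After $r$ rounds a node knows exactly its radius-$r$ ball (identities, inputs, certificates, adjacencies). A time bound $t$ is a function of $(G,\mathbf{x},\mathrm{Id})$, non-decreasing under taking connected induced subgraphs with restricted inputs and identities. $t=o(n)$ means $t(G,\mathbf{x},\mathrm{Id})\le g(|V(G)|)$ for some $g$ with $g(n)/n\to0$. A verification algorithm receives, besides $(G,\mathbf{x})$ and $\mathrm{Id}$, a certificate $\mathbf{y}(v)\in\{0,1\}^*$ at each node. It verifies $\mathcal{L}$ if: - for every $(G,\mathbf{x})\in\mathcal{L}$ there is a certificate $\mathbf{y}$ (depending only on $(G,\mathbf{x})$) such that for every identity assignment all nodes output "yes"; - for every $(G,\mathbf{x})\notin\mathcal{L}$, for every certificate and every identity assignment, some node outputs "no". $\mathrm{NLD}(t)$ is the class of languages verifiable by a verification algorithm running in time $t$. *)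

theory Defs
  imports Complex_Main
begin

text \<open>Graphs have vertices in nat (every finite graph is isomorphic to one of these).\<close>

type_synonym bits = "bool list"
type_synonym config = "nat set \<times> (nat \<times> nat) set \<times> (nat \<Rightarrow> bits)"

definition is_graph :: "nat set \<Rightarrow> (nat \<times> nat) set \<Rightarrow> bool" where
  "is_graph V E \<longleftrightarrow> finite V \<and> V \<noteq> {} \<and> E \<subseteq> V \<times> V \<and> sym E \<and> irrefl E
     \<and> (\<forall>u\<in>V. \<forall>w\<in>V. (u, w) \<in> E\<^sup>*)"

definition ball_r :: "nat set \<Rightarrow> (nat \<times> nat) set \<Rightarrow> nat \<Rightarrow> nat \<Rightarrow> nat set" where
  "ball_r V E v r = {u \<in> V. \<exists>k \<le> r. (v, u) \<in> E ^^ k}"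

text \<open>What node v knows after r rounds: the round number, its own identity, and the
radius-r ball (identities, inputs, certificates, adjacencies), described via identities.\<close>
type_synonym view = "nat \<times> nat \<times> (nat \<times> bits \<times> bits) set \<times> (nat \<times> nat) set"

definition view_of :: "nat set \<Rightarrow> (nat \<times> nat) set \<Rightarrow> (nat \<Rightarrow> bits) \<Rightarrow> (nat \<Rightarrow> bits)
    \<Rightarrow> (nat \<Rightarrow> nat) \<Rightarrow> nat \<Rightarrow> nat \<Rightarrow> view" where
  "view_of V E x y ids v r =
     (let B = ball_r V E v r in
      (r, ids v, (\<lambda>u. (ids u, x u, y u)) ` B,
       {(ids u, ids w) | u w. u \<in> B \<and> w \<in> B \<and> (u, w) \<in> E}))"

text \<open>A (deterministic LOCAL) algorithm: a stopping rule and an output rule on views.\<close>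
definition output_of :: "(view \<Rightarrow> bool) \<Rightarrow> (view \<Rightarrow> bool) \<Rightarrow> nat set \<Rightarrow> (nat \<times> nat) set
    \<Rightarrow> (nat \<Rightarrow> bits) \<Rightarrow> (nat \<Rightarrow> bits) \<Rightarrow> (nat \<Rightarrow> nat) \<Rightarrow> nat \<Rightarrow> bool" where
  "output_of halt out V E x y ids v =
     out (view_of V E x y ids v (LEAST r. halt (view_of V E x y ids v r)))"

type_synonym time_fn = "nat set \<Rightarrow> (nat \<times> nat) set \<Rightarrow> (nat \<Rightarrow> bits) \<Rightarrow> (nat \<Rightarrow> nat) \<Rightarrow> nat"

definition time_bound :: "time_fn \<Rightarrow> bool" where
  "time_bound t \<longleftrightarrow>
     (\<forall>V E x ids V' x' ids'. is_graph V E \<and> inj_on ids V \<and> V' \<subseteq> V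
        \<and> is_graph V' (E \<inter> (V' \<times> V'))
        \<and> (\<forall>v\<in>V'. x' v = x v \<and> ids' v = ids v)
        \<longrightarrow> t V' (E \<inter> (V' \<times> V')) x' ids' \<le> t V E x ids)"

definition sublinear :: "time_fn \<Rightarrow> bool" where
  "sublinear t \<longleftrightarrow>
     (\<exists>g :: nat \<Rightarrow> real. (\<lambda>n. g n / real n) \<longlonglongrightarrow> 0 \<and>
        (\<forall>V E x ids. is_graph V E \<and> inj_on ids V \<longrightarrow> real (t V E x ids) \<le> g (card V)))"

definition verifies :: "(view \<Rightarrow> bool) \<Rightarrow> (view \<Rightarrow> bool) \<Rightarrow> time_fn \<Rightarrow> config set \<Rightarrow> bool" where
  "verifies halt out t L \<longleftrightarrow>
     (\<forall>V E x y ids. is_graph V E \<and> inj_on ids V \<longrightarrow>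
        (\<forall>v\<in>V. \<exists>r \<le> t V E x ids. halt (view_of V E x y ids v r)))
   \<and> (\<forall>V E x. is_graph V E \<and> (V, E, x) \<in> L \<longrightarrow>
        (\<exists>y. \<forall>ids. inj_on ids V \<longrightarrow> (\<forall>v\<in>V. output_of halt out V E x y ids v)))
   \<and> (\<forall>V E x. is_graph V E \<and> (V, E, x) \<notin> L \<longrightarrow>
        (\<forall>y ids. inj_on ids V \<longrightarrow> (\<exists>v\<in>V. \<not> output_of halt out V E x y ids v)))"

definition NLD :: "time_fn \<Rightarrow> config set set" where
  "NLD t = {L. \<exists>halt out. verifies halt out t L}"

fun bin :: "nat \<Rightarrow> bits" where
  "bin n = (if n < 2 then [odd n] else bin (n div 2) @ [odd n])"

definition InpEqSize :: "config set" where
  "InpEqSize = {(V, E, x). is_graph V E \<and> (\<forall>v\<in>V. x v = bin (card V))}"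

end

theory Submission
  imports Defs
begin

declare bin.simps[simp del]

definition cE :: "nat \<Rightarrow> (nat \<times> nat) set" where
  "cE m = {(i,j). i < m \<and> j < m \<and> (j = Suc i mod m \<or> i = Suc j mod m)}"

lemma cE_graph:
  assumes "m \<ge> 3"
  shows "is_graph {..<m} (cE m)"
proof -
  have p0: "(0, i) \<in> (cE m)\<^sup>*" if "i < m" for i
    using that
  proof (induction i)
    case 0 then show ?case by simp
  next
    case (Suc i)
    then have "(i, Suc i) \<in> cE m" by (simp add: cE_def)
    with Suc show ?case by (meson Suc_lessD rtrancl.rtrancl_into_rtrancl)
  qed
  have sy: "sym (cE m)" by (auto simp: cE_def sym_def)
  have conn: "(u, w) \<in> (cE m)\<^sup>*" if "u < m" "w < m" for u w
  proof -
    have "(u, 0) \<in> (cE m)\<^sup>*" using p0[OF that(1)] sym_rtrancl[OF sy] by (meson symD)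
    then show ?thesis using p0[OF that(2)] by simp
  qed
  have irr: "irrefl (cE m)"
  proof -
    have "\<not> (i = Suc i mod m)" if "i < m" for i
    proof (cases "Suc i < m")
      case True then show ?thesis by simp
    next
      case False then have "Suc i = m" using that by simp
      then show ?thesis using assms by simp
    qed
    then show ?thesis by (auto simp: irrefl_def cE_def)
  qed
  have "0 \<in> {..<m}" using assms by simp
  then have ne: "{..<m} \<noteq> {}" by blast
  show ?thesis unfolding is_graph_def using conn sy irr assms ne
    by (auto simp: cE_def)
qed

lemma cyc_offset:
  assumes "(v,u) \<in> cE m ^^ k" "v < m"
  shows "\<exists>d::int. \<bar>d\<bar> \<le> int k \<and> int u = (int v + d) mod int m"
  using assms(1)
proof (induction k arbitrary: u)
  case 0
  then show ?case using assms(2) by (intro exI[of _ 0]) auto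
next
  case (Suc k)
  from Suc.prems obtain w where w: "(v,w) \<in> cE m ^^ k" "(w,u) \<in> cE m" by (rule relpow_Suc_E)
  from Suc.IH[OF w(1)] obtain d where d: "\<bar>d\<bar> \<le> int k" "int w = (int v + d) mod int m" by blast
  from w(2) have wu: "w < m" "u < m" "u = Suc w mod m \<or> w = Suc u mod m" by (auto simp: cE_def)
  show ?case
  proof (cases "u = Suc w mod m")
    case True
    then have "int u = (int w + 1) mod int m" by (simp add: zmod_int add.commute)
    also have "\<dots> = (int v + (d + 1)) mod int m" using d(2) by (simp add: mod_add_left_eq add.assoc)
    finally show ?thesis using d(1) by (intro exI[of _ "d+1"]) auto
  next
    case False
    then have "w = Suc u mod m" using wu by simp
    then have "int w = (int u + 1) mod int m" by (simp add: zmod_int add.commute)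
    then have "(int u + 1) mod int m = (int v + d) mod int m" using d(2) by simp
    then have "(int u + 1 - 1) mod int m = (int v + d - 1) mod int m"
      by (metis mod_diff_left_eq)
    then have "int u = (int v + (d - 1)) mod int m" using wu(2) by (simp add: algebra_simps)
    then show ?thesis using d(1) by (intro exI[of _ "d-1"]) auto
  qed
qed

lemma cover_edge:
  assumes "(i,j) \<in> cE (2*n)" "n > 0"
  shows "(i mod n, j mod n) \<in> cE n"
proof -
  have mm: "Suc k mod (2*n) mod n = Suc (k mod n) mod n" for k
    by (simp add: mod_mod_cancel mod_Suc_eq)
  show ?thesis using assms mm by (auto simp: cE_def)
qed

lemma lift_edge:
  assumes "a < 2*n" "(a mod n, b) \<in> cE n"
  shows "\<exists>c. (a,c) \<in> cE (2*n) \<and> c mod n = b"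
proof -
  have n: "n > 0" using assms by auto
  from assms(2) have b: "b < n" and cs: "b = Suc (a mod n) mod n \<or> a mod n = Suc b mod n"
    by (auto simp: cE_def)
  show ?thesis
  proof (cases "b = Suc (a mod n) mod n")
    case True
    have "(a, Suc a mod (2*n)) \<in> cE (2*n)" using assms(1) by (auto simp: cE_def)
    moreover have "Suc a mod (2*n) mod n = b" using True by (simp add: mod_mod_cancel mod_Suc_eq)
    ultimately show ?thesis by blast
  next
    case False
    then have h: "a mod n = Suc b mod n" using cs by simp
    have h': "int a mod int n = (int b + 1) mod int n" using h by (metis of_nat_Suc zmod_int add.commute)
    have "int ((a + 2*n - 1) mod n) = (int a + (2*int n - 1)) mod int n" using n
      by (simp add: zmod_int of_nat_diff add_diff_eq)
    also have "\<dots> = (int a mod int n + (2*int n - 1)) mod int n" by (simp add: mod_add_left_eq)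
    also have "\<dots> = ((int b + 1) mod int n + (2*int n - 1)) mod int n" using h' by simp
    also have "\<dots> = (int b + 2 * int n) mod int n" by (simp add: mod_add_left_eq)
    also have "\<dots> = int b" using b by simp
    finally have c1: "(a + 2*n - 1) mod n = b" by simp
    have c1': "(a + 2*n - 1) mod (2*n) mod n = b" using c1 by (simp add: mod_mod_cancel)
    have c2: "Suc ((a + 2*n - 1) mod (2*n)) mod (2*n) = a mod (2*n)" using n by (simp add: mod_Suc_eq)
    have "(a, (a + 2*n - 1) mod (2*n)) \<in> cE (2*n)" using c2 assms(1) n by (auto simp: cE_def)
    then show ?thesis using c1' by blast
  qed
qed

lemma ball_off:
  assumes "u \<in> ball_r {..<m} (cE m) v K" "v < m"
  shows "u < m \<and> (\<exists>d::int. \<bar>d\<bar> \<le> int K \<and> int u = (int v + d) mod int m)"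
proof -
  from assms(1) obtain k where k: "k \<le> K" "(v,u) \<in> cE m ^^ k" "u < m" by (auto simp: ball_r_def)
  from cyc_offset[OF k(2) assms(2)] k(1) k(3) show ?thesis by force
qed

lemma mod_half:
  assumes "int u = (x::int) mod int (2*n)"
  shows "int (u mod n) = x mod int n"
proof -
  have "int (u mod n) = int u mod int n" by (simp add: zmod_int)
  also have "\<dots> = x mod int (2*n) mod int n" using assms by simp
  also have "\<dots> = x mod int n" by (simp add: mod_mod_cancel)
  finally show ?thesis .
qed

lemma small_dvd:
  assumes "(n::int) dvd e" "\<bar>e\<bar> < n"
  shows "e = 0"
proof (rule ccontr)
  assume "e \<noteq> 0"
  then have "\<bar>n\<bar> \<le> \<bar>e\<bar>" using dvd_imp_le_int assms(1) by blast
  then show False using assms(2) by linarith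
qed

lemma inj_ball:
  assumes "2*K < n" "v < 2*n"
    "u1 \<in> ball_r {..<2*n} (cE (2*n)) v K" "u2 \<in> ball_r {..<2*n} (cE (2*n)) v K"
    "u1 mod n = u2 mod n"
  shows "u1 = u2"
proof -
  obtain d1 where d1: "\<bar>d1\<bar> \<le> int K" "int u1 = (int v + d1) mod int (2*n)"
    using ball_off[OF assms(3) assms(2)] by blast
  obtain d2 where d2: "\<bar>d2\<bar> \<le> int K" "int u2 = (int v + d2) mod int (2*n)"
    using ball_off[OF assms(4) assms(2)] by blast
  have "(int v + d1) mod int n = (int v + d2) mod int n"
    using mod_half[OF d1(2)] mod_half[OF d2(2)] assms(5) by metis
  then have "int n dvd (int v + d1) - (int v + d2)" by (simp add: mod_eq_dvd_iff)
  then have "int n dvd d1 - d2" by simp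
  moreover have "\<bar>d1 - d2\<bar> < int n" using d1 d2 assms(1) by linarith
  ultimately have "d1 - d2 = 0" using small_dvd by blast
  then show ?thesis using d1 d2 by (metis eq_iff_diff_eq_0 of_nat_eq_iff)
qed

lemma refl_edge1:
  assumes "2*K + 1 < n" "v < 2*n"
    "u \<in> ball_r {..<2*n} (cE (2*n)) v K" "w \<in> ball_r {..<2*n} (cE (2*n)) v K"
    "w mod n = Suc (u mod n) mod n"
  shows "(u, w) \<in> cE (2*n)"
proof -
  obtain du where du: "\<bar>du\<bar> \<le> int K" "int u = (int v + du) mod int (2*n)" "u < 2*n"
    using ball_off[OF assms(3) assms(2)] by blast
  obtain dw where dw: "\<bar>dw\<bar> \<le> int K" "int w = (int v + dw) mod int (2*n)" "w < 2*n"
    using ball_off[OF assms(4) assms(2)] by blast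
  have "int (w mod n) = (int (u mod n) + 1) mod int n" using assms(5) by (simp add: zmod_int add.commute)
  then have "(int v + dw) mod int n = ((int v + du) mod int n + 1) mod int n"
    using mod_half[OF du(2)] mod_half[OF dw(2)] by simp
  also have "\<dots> = (int v + du + 1) mod int n" by (simp add: mod_add_left_eq)
  finally have "int n dvd (int v + dw) - (int v + du + 1)" by (simp add: mod_eq_dvd_iff)
  then have "int n dvd dw - du - 1" by (simp add: algebra_simps)
  moreover have "\<bar>dw - du - 1\<bar> < int n" using du dw assms(1) by linarith
  ultimately have "dw - du - 1 = 0" using small_dvd by blast
  then have "int w = (int v + du + 1) mod int (2*n)" using dw by (simp add: algebra_simps)
  also have "\<dots> = ((int v + du) mod int (2*n) + 1) mod int (2*n)" by (simp add: mod_add_left_eq)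
  also have "\<dots> = int (Suc u mod (2*n))" using du(2) by (simp add: zmod_int add.commute)
  finally have "w = Suc u mod (2*n)" by simp
  then show ?thesis using du(3) dw(3) by (auto simp: cE_def)
qed

lemma refl_edge:
  assumes "2*K + 1 < n" "v < 2*n"
    "u \<in> ball_r {..<2*n} (cE (2*n)) v K" "w \<in> ball_r {..<2*n} (cE (2*n)) v K"
    "(u mod n, w mod n) \<in> cE n"
  shows "(u, w) \<in> cE (2*n)"
proof -
  from assms(5) have "w mod n = Suc (u mod n) mod n \<or> u mod n = Suc (w mod n) mod n"
    by (auto simp: cE_def)
  then show ?thesis
  proof
    assume "w mod n = Suc (u mod n) mod n"
    then show ?thesis using refl_edge1[OF assms(1-4)] by blast
  next
    assume "u mod n = Suc (w mod n) mod n"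
    then have "(w, u) \<in> cE (2*n)" using refl_edge1[OF assms(1,2,4,3)] by blast
    then show ?thesis by (auto simp: cE_def)
  qed
qed

lemma pow_lt:
  assumes "(v,u) \<in> cE m ^^ k" "v < m"
  shows "u < m"
  using assms
proof (cases k)
  case 0 then show ?thesis using assms by simp
next
  case (Suc k')
  then obtain q where "(q,u) \<in> cE m" using assms(1) by (metis relpow_Suc_E)
  then show ?thesis by (auto simp: cE_def)
qed

lemma cover_pow:
  assumes "(v,u) \<in> cE (2*n) ^^ k" "n > 0"
  shows "(v mod n, u mod n) \<in> cE n ^^ k"
  using assms(1)
proof (induction k arbitrary: u)
  case 0 then show ?case by simp
next
  case (Suc k)
  from Suc.prems obtain w where w: "(v,w) \<in> cE (2*n) ^^ k" "(w,u) \<in> cE (2*n)" by (rule relpow_Suc_E)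
  show ?case using Suc.IH[OF w(1)] cover_edge[OF w(2) assms(2)] by (rule relpow_Suc_I)
qed

lemma lift_pow:
  assumes "(v mod n, w) \<in> cE n ^^ k" "v < 2*n"
  shows "\<exists>u. (v,u) \<in> cE (2*n) ^^ k \<and> u mod n = w"
  using assms(1)
proof (induction k arbitrary: w)
  case 0 then show ?case by auto
next
  case (Suc k)
  from Suc.prems obtain z where z: "(v mod n, z) \<in> cE n ^^ k" "(z,w) \<in> cE n" by (rule relpow_Suc_E)
  from Suc.IH[OF z(1)] obtain u where u: "(v,u) \<in> cE (2*n) ^^ k" "u mod n = z" by blast
  have ul: "u < 2*n" using pow_lt[OF u(1) assms(2)] .
  from lift_edge[OF ul] z(2) u(2) obtain c where "(u,c) \<in> cE (2*n)" "c mod n = w" by blast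
  then show ?case using relpow_Suc_I[OF u(1)] by blast
qed

lemma ball_image:
  assumes "v < 2*n" "n > 0"
  shows "(\<lambda>u. u mod n) ` ball_r {..<2*n} (cE (2*n)) v r = ball_r {..<n} (cE n) (v mod n) r"
proof
  show "(\<lambda>u. u mod n) ` ball_r {..<2*n} (cE (2*n)) v r \<subseteq> ball_r {..<n} (cE n) (v mod n) r"
    using cover_pow assms(2) by (fastforce simp: ball_r_def)
next
  show "ball_r {..<n} (cE n) (v mod n) r \<subseteq> (\<lambda>u. u mod n) ` ball_r {..<2*n} (cE (2*n)) v r"
  proof
    fix w assume "w \<in> ball_r {..<n} (cE n) (v mod n) r"
    then obtain k where k: "k \<le> r" "(v mod n, w) \<in> cE n ^^ k" by (auto simp: ball_r_def)
    from lift_pow[OF k(2) assms(1)] obtain u where u: "(v,u) \<in> cE (2*n) ^^ k" "u mod n = w" by blast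
    have "u < 2*n" using pow_lt[OF u(1) assms(1)] .
    then have "u \<in> ball_r {..<2*n} (cE (2*n)) v r" using u(1) k(1) by (auto simp: ball_r_def)
    then show "w \<in> (\<lambda>u. u mod n) ` ball_r {..<2*n} (cE (2*n)) v r" using u(2) by blast
  qed
qed

lemma least_eq:
  fixes P Q :: "nat \<Rightarrow> bool"
  assumes "\<And>r. r \<le> K \<Longrightarrow> P r = Q r" "Q r1" "r1 \<le> K"
  shows "(LEAST r. P r) = (LEAST r. Q r)"
proof -
  have q: "(LEAST r. Q r) \<le> r1" using assms(2) by (rule wellorder_Least_lemma(2))
  have "Q (LEAST r. Q r)" using assms(2) by (rule LeastI)
  then have p: "P (LEAST r. Q r)" using assms(1) q assms(3) by simp
  have "\<And>r. r < (LEAST r. Q r) \<Longrightarrow> \<not> P r"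
    using assms(1) q assms(3) not_less_Least by fastforce
  then have "\<And>r. P r \<Longrightarrow> (LEAST r. Q r) \<le> r" using not_less by blast
  then show ?thesis using p by (intro Least_equality) auto
qed

lemma bin_double: "n > 0 \<Longrightarrow> bin (2*n) = bin n @ [False]"
  by (subst bin.simps) simp

theorem theorem3:
  fixes t :: time_fn
  assumes "time_bound t" and "sublinear t"
  shows "InpEqSize \<notin> NLD t"
proof
  assume "InpEqSize \<in> NLD t"
  then obtain halt out where ver: "verifies halt out t InpEqSize" by (auto simp: NLD_def)
  note vv = ver[unfolded verifies_def]
  have c1: "\<And>V E x y ids. is_graph V E \<Longrightarrow> inj_on ids V \<Longrightarrow> v \<in> V \<Longrightarrow>
        \<exists>r \<le> t V E x ids. halt (view_of V E x y ids v r)" for v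
    using conjunct1[OF vv] by blast
  have c2: "\<And>V E x. is_graph V E \<Longrightarrow> (V, E, x) \<in> InpEqSize \<Longrightarrow>
        (\<exists>y. \<forall>ids. inj_on ids V \<longrightarrow> (\<forall>v\<in>V. output_of halt out V E x y ids v))"
    using conjunct1[OF conjunct2[OF vv]] by blast
  have c3: "\<And>V E x y ids. is_graph V E \<Longrightarrow> (V, E, x) \<notin> InpEqSize \<Longrightarrow> inj_on ids V \<Longrightarrow>
        (\<exists>v\<in>V. \<not> output_of halt out V E x y ids v)"
    using conjunct2[OF conjunct2[OF vv]] by blast
  from assms(2) obtain g :: "nat \<Rightarrow> real" where g: "(\<lambda>n. g n / real n) \<longlonglongrightarrow> 0"
    "\<And>V E x ids. is_graph V E \<Longrightarrow> inj_on ids V \<Longrightarrow> real (t V E x ids) \<le> g (card V)"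
    unfolding sublinear_def by blast
  have "eventually (\<lambda>n. g n / real n < 1/4) sequentially"
    using g(1) by (rule order_tendstoD) simp
  moreover have "eventually (\<lambda>n. 3 \<le> n) sequentially" by (rule eventually_ge_at_top)
  ultimately have "eventually (\<lambda>n. g n / real n < 1/4 \<and> 3 \<le> n) sequentially"
    by (rule eventually_conj)
  then obtain n where n: "g n / real n < 1/4" "3 \<le> n" by (auto simp: eventually_sequentially)
  have npos: "n > 0" using n by simp
  have gn: "4 * g n < real n" using n(1) npos by (simp add: divide_less_eq)
  define K where "K = (n - 1) div 4"
  have K: "2*K + 1 < n" using n(2) unfolding K_def by linarith
  define Vg where "Vg = {..<n}"
  define Eg where "Eg = cE n"
  define Vb where "Vb = {..<2*n}"
  define Eb where "Eb = cE (2*n)"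
  define xx :: "nat \<Rightarrow> bits" where "xx = (\<lambda>_. bin n)"
  have gg: "is_graph Vg Eg" unfolding Vg_def Eg_def using n(2) by (intro cE_graph) simp
  have gb: "is_graph Vb Eb" unfolding Vb_def Eb_def using n(2) by (intro cE_graph) simp
  have "(Vg, Eg, xx) \<in> InpEqSize" using gg by (simp add: InpEqSize_def Vg_def xx_def)
  from c2[OF gg this] obtain y where y: "\<And>ids. inj_on ids Vg \<Longrightarrow> (\<forall>v\<in>Vg. output_of halt out Vg Eg xx y ids v)"
    by blast
  define yb where "yb = (\<lambda>u. y (u mod n))"
  have "bin (2*n) \<noteq> bin n" using bin_double[OF npos] by simp
  moreover have "(0::nat) \<in> Vb" using npos by (simp add: Vb_def)
  moreover have "card Vb = 2*n" by (simp add: Vb_def)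
  ultimately have "xx 0 \<noteq> bin (card Vb)" "(0::nat) \<in> Vb" by (simp_all add: xx_def)
  then have "(Vb, Eb, xx) \<notin> InpEqSize" unfolding InpEqSize_def by blast
  from c3[OF gb this inj_on_id, of yb] obtain v where v: "v \<in> Vb" "\<not> output_of halt out Vb Eb xx yb id v"
    by blast
  have vl: "v < 2*n" using v(1) by (simp add: Vb_def)
  define B where "B = ball_r Vb Eb v K"
  have Bsub: "B \<subseteq> Vb" by (auto simp: B_def ball_r_def)
  have K2: "2*K < n" using K by simp
  have Binj: "u1 = u2" if "u1 \<in> B" "u2 \<in> B" "u1 mod n = u2 mod n" for u1 u2
    using inj_ball[OF K2 vl, of u1 u2] that unfolding B_def Vb_def Eb_def by blast
  define idg where "idg = (\<lambda>w. if \<exists>u\<in>B. u mod n = w then (THE u. u \<in> B \<and> u mod n = w) else w + 2*n)"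
  have idg_u: "idg (u mod n) = u" if "u \<in> B" for u
  proof -
    have "(THE u'. u' \<in> B \<and> u' mod n = u mod n) = u"
      using that Binj by (intro the_equality) auto
    then show ?thesis using that unfolding idg_def by auto
  qed
  have idg_lt: "idg w < 2*n" if "\<exists>u\<in>B. u mod n = w" for w
    using that idg_u Bsub by (auto simp: Vb_def)
  have inj_idg: "inj_on idg Vg"
  proof (rule inj_onI)
    fix a b assume ab: "a \<in> Vg" "b \<in> Vg" "idg a = idg b"
    show "a = b"
    proof (cases "\<exists>u\<in>B. u mod n = a")
      case True
      then obtain u where u: "u \<in> B" "u mod n = a" by blast
      show ?thesis
      proof (cases "\<exists>u\<in>B. u mod n = b")
        case True
        then obtain w where w: "w \<in> B" "w mod n = b" by blast
        show ?thesis using ab(3) idg_u u w by metis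
      next
        case False
        then have "idg b = b + 2*n" by (simp add: idg_def)
        then show ?thesis using ab(3) idg_lt[of a] True by simp
      qed
    next
      case False
      then have ia: "idg a = a + 2*n" by (simp add: idg_def)
      show ?thesis
      proof (cases "\<exists>u\<in>B. u mod n = b")
        case True
        then show ?thesis using ab(3) idg_lt[of b] ia by simp
      next
        case False
        then show ?thesis using ab(3) ia by (simp add: idg_def)
      qed
    qed
  qed
  have Bimg: "(\<lambda>u. u mod n) ` ball_r Vb Eb v r = ball_r Vg Eg (v mod n) r" for r
    unfolding Vb_def Eb_def Vg_def Eg_def using ball_image[OF vl npos] .
  have Bmono: "ball_r Vb Eb v r \<subseteq> B" if "r \<le> K" for r
    using that unfolding B_def ball_r_def by (blast intro: le_trans)
  have v0: "(v, v) \<in> Eb ^^ 0" by simp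
  have vB: "v \<in> B" using v(1) v0 unfolding B_def ball_r_def by blast
  have eqv: "view_of Vb Eb xx yb id v r = view_of Vg Eg xx y idg (v mod n) r" if r: "r \<le> K" for r
  proof -
    let ?Bb = "ball_r Vb Eb v r"
    let ?Bg = "ball_r Vg Eg (v mod n) r"
    have sub: "?Bb \<subseteq> B" using Bmono[OF r] .
    have e1: "(\<lambda>u. (id u, xx u, yb u)) ` ?Bb = (\<lambda>w. (idg w, xx w, y w)) ` ?Bg"
    proof -
      have "(\<lambda>w. (idg w, xx w, y w)) ` ?Bg = (\<lambda>u. (idg (u mod n), xx (u mod n), y (u mod n))) ` ?Bb"
        unfolding Bimg[symmetric] image_image ..
      also have "\<dots> = (\<lambda>u. (id u, xx u, yb u)) ` ?Bb"
      proof (rule image_cong[OF refl])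
        fix u assume "u \<in> ?Bb"
        then have "idg (u mod n) = u" using idg_u sub by blast
        then show "(idg (u mod n), xx (u mod n), y (u mod n)) = (id u, xx u, yb u)"
          by (simp add: xx_def yb_def)
      qed
      finally show ?thesis by simp
    qed
    have edge_iff: "(u, w) \<in> Eb \<longleftrightarrow> (u mod n, w mod n) \<in> Eg" if "u \<in> B" "w \<in> B" for u w
    proof
      assume "(u, w) \<in> Eb" then show "(u mod n, w mod n) \<in> Eg"
        unfolding Eb_def Eg_def by (rule cover_edge[OF _ npos])
    next
      assume "(u mod n, w mod n) \<in> Eg" then show "(u, w) \<in> Eb"
      proof -
        have "u \<in> ball_r {..<2*n} (cE (2*n)) v K" "w \<in> ball_r {..<2*n} (cE (2*n)) v K"
          using that unfolding B_def Eb_def Vb_def by simp_all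
        from refl_edge[OF K vl this] show ?thesis unfolding Eb_def Eg_def
          using \<open>(u mod n, w mod n) \<in> Eg\<close> unfolding Eg_def by simp
      qed
    qed
    have e2: "{(id u, id w) |u w. u \<in> ?Bb \<and> w \<in> ?Bb \<and> (u, w) \<in> Eb}
        = {(idg a, idg b) |a b. a \<in> ?Bg \<and> b \<in> ?Bg \<and> (a, b) \<in> Eg}"
    proof (intro equalityI subsetI)
      fix p assume "p \<in> {(id u, id w) |u w. u \<in> ?Bb \<and> w \<in> ?Bb \<and> (u, w) \<in> Eb}"
      then obtain u w where uw: "p = (u, w)" "u \<in> ?Bb" "w \<in> ?Bb" "(u, w) \<in> Eb" by auto
      have uB: "u \<in> B" "w \<in> B" using uw(2,3) sub by blast+
      have "u mod n \<in> ?Bg" using imageI[OF uw(2), of "\<lambda>u. u mod n"] Bimg[of r] by simp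
      moreover have "w mod n \<in> ?Bg" using imageI[OF uw(3), of "\<lambda>u. u mod n"] Bimg[of r] by simp
      moreover have "(u mod n, w mod n) \<in> Eg" using edge_iff[OF uB] uw(4) by simp
      moreover have "p = (idg (u mod n), idg (w mod n))" using uw(1) idg_u[OF uB(1)] idg_u[OF uB(2)] by simp
      ultimately show "p \<in> {(idg a, idg b) |a b. a \<in> ?Bg \<and> b \<in> ?Bg \<and> (a, b) \<in> Eg}" by blast
    next
      fix p assume "p \<in> {(idg a, idg b) |a b. a \<in> ?Bg \<and> b \<in> ?Bg \<and> (a, b) \<in> Eg}"
      then obtain a b where ab: "p = (idg a, idg b)" "a \<in> ?Bg" "b \<in> ?Bg" "(a, b) \<in> Eg" by auto
      have "a \<in> (\<lambda>u. u mod n) ` ?Bb" using ab(2) Bimg[of r] by simp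
      then obtain u where u: "u \<in> ?Bb" "a = u mod n" by (rule imageE) simp
      have "b \<in> (\<lambda>u. u mod n) ` ?Bb" using ab(3) Bimg[of r] by simp
      then obtain w where w: "w \<in> ?Bb" "b = w mod n" by (rule imageE) simp
      have uB: "u \<in> B" "w \<in> B" using u(1) w(1) sub by blast+
      have "(u, w) \<in> Eb" using edge_iff[OF uB] ab(4) u(2) w(2) by simp
      moreover have "p = (id u, id w)" using ab(1) u(2) w(2) idg_u[OF uB(1)] idg_u[OF uB(2)] by simp
      ultimately show "p \<in> {(id u, id w) |u w. u \<in> ?Bb \<and> w \<in> ?Bb \<and> (u, w) \<in> Eb}" using u w by blast
    qed
    have e3: "idg (v mod n) = id v" using idg_u vB by simp
    show ?thesis unfolding view_of_def Let_def using e1 e2 e3 by simp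
  qed
  have vg: "v mod n \<in> Vg" using npos by (simp add: Vg_def)
  from c1[OF gg inj_idg vg, of xx y] obtain r1 where r1: "r1 \<le> t Vg Eg xx idg" "halt (view_of Vg Eg xx y idg (v mod n) r1)"
    by blast
  have "real r1 \<le> g n" using r1(1) g(2)[OF gg inj_idg, of xx] by (simp add: Vg_def)
  then have "4 * r1 < n" using gn by linarith
  then have r1K: "r1 \<le> K" unfolding K_def by linarith
  define L where "L = (LEAST r. halt (view_of Vg Eg xx y idg (v mod n) r))"
  have Lb: "(LEAST r. halt (view_of Vb Eb xx yb id v r)) = L"
    unfolding L_def
  proof (rule least_eq[of K _ _ r1])
    fix r assume "r \<le> K" then show "halt (view_of Vb Eb xx yb id v r) = halt (view_of Vg Eg xx y idg (v mod n) r)"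
      using eqv by simp
  qed (use r1 r1K in auto)
  have "L \<le> r1" unfolding L_def using r1(2) by (rule wellorder_Least_lemma(2))
  then have LK: "L \<le> K" using r1K by linarith
  have og: "output_of halt out Vg Eg xx y idg (v mod n)" using y[OF inj_idg] vg by blast
  have "output_of halt out Vb Eb xx yb id v = out (view_of Vb Eb xx yb id v L)"
    unfolding output_of_def Lb ..
  also have "\<dots> = out (view_of Vg Eg xx y idg (v mod n) L)" using eqv[OF LK] by simp
  also have "\<dots> = output_of halt out Vg Eg xx y idg (v mod n)" unfolding output_of_def L_def ..
  finally have "output_of halt out Vb Eb xx yb id v" using og by simp
  with v(2) show False by simp
qed

end
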